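(* Let $d>0$ and $a\geq 7$ be integers with $\gcd(a,d)=1$, and put $s_n=\frac{n}{2}\,[2a+(n-1)d]$ for $1\leq n\leq 4$, i.e. $s_1=a$, $s_2=2a+d$, $s_3=3a+3d$, $s_4=4a+6d$. Then $\{s_1,s_2,s_3,s_4\}$ is a minimal system of generators of the numerical semigroup $\Gamma_4=\langle s_1,s_2,s_3,s_4\rangle$ (no $s_j$ is a nonnegative integer combination of the others).
   Context: A numerical semigroup is a submonoid of $(\mathbb{N},+)$ with finite complement; it has a unique minimal system of generators. *)

theory Defs
  imports Main
begin

inductive_set monoid_gen :: "nat set \<Rightarrow> nat set" for A :: "nat set" where
  zero: "0 \<in> monoid_gen A"
| add: "x \<in> A \<Longrightarrow> y \<in> monoid_gen A \<Longrightarrow> x + y \<in> monoid_gen A"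

definition minimal_system_of_generators :: "nat set \<Rightarrow> bool" where
  "minimal_system_of_generators A \<longleftrightarrow> (\<forall>x\<in>A. x \<notin> monoid_gen (A - {x}))"

text \<open>s_n = n/2 (2a + (n-1)d); the product is always even.\<close>
definition s_term :: "nat \<Rightarrow> nat \<Rightarrow> nat \<Rightarrow> nat" where
  "s_term a d n = n * (2 * a + (n - 1) * d) div 2"

end

theory Submission
  imports Defs
begin

lemma mg3: "x \<in> monoid_gen {p,q,r} \<Longrightarrow> \<exists>i j k. x = i*p+j*q+k*r"
proof (induction rule: monoid_gen.induct)
  case zero then show ?case by (rule exI[of _ 0]) simp
next
  case (add x y)
  then obtain i j k where y: "y = i*p+j*q+k*r" by blast
  from add(1) consider "x = p" | "x = q" | "x = r" by blast
  then show ?case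
  proof cases
    case 1 then show ?thesis using y by (intro exI[of _ "Suc i"] exI[of _ j] exI[of _ k]) simp
  next
    case 2 then show ?thesis using y by (intro exI[of _ i] exI[of _ "Suc j"] exI[of _ k]) simp
  next
    case 3 then show ?thesis using y by (intro exI[of _ i] exI[of _ j] exI[of _ "Suc k"]) simp
  qed
qed

lemma dvd_small:
  fixes a d m :: int
  assumes "coprime a d" "a dvd m * d" "\<bar>m\<bar> < a"
  shows "m = 0"
proof -
  have "a dvd m" using assms(1,2) by (simp add: coprime_dvd_mult_left_iff)
  show ?thesis
  proof (rule ccontr)
    assume "m \<noteq> 0"
    then have "\<bar>a\<bar> \<le> \<bar>m\<bar>" using \<open>a dvd m\<close> dvd_imp_le_int by blast
    then show False using assms(3) by linarith
  qed
qed

lemma svals: "s_term a d 1 = a" "s_term a d (Suc 0) = a" "s_term a d 2 = 2*a+d" "s_term a d 3 = 3*a+3*d"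
  "s_term a d 4 = 4*a+6*d"
  unfolding s_term_def by simp_all

theorem theorem2p1:
  fixes a d :: nat
  assumes "d > 0" and "a \<ge> 7" and "gcd a d = 1"
  shows "inj_on (s_term a d) {1..4} \<and>
         minimal_system_of_generators (s_term a d ` {1..4}) \<and>
         (\<forall>j\<in>{1..4::nat}. s_term a d j \<notin> monoid_gen (s_term a d ` ({1..4} - {j})))"
proof -
  have cop: "coprime (int a) (int d)" using assms(3)
    by (simp add: coprime_iff_gcd_eq_1 gcd_int_int_eq)
  have U: "{1..4::nat} = {1,2,3,4}" by auto
  have n1: "a \<notin> monoid_gen {2*a+d, 3*a+3*d, 4*a+6*d}"
  proof
    assume "a \<in> monoid_gen {2*a+d, 3*a+3*d, 4*a+6*d}"
    then obtain i j k where e: "a = i*(2*a+d)+j*(3*a+3*d)+k*(4*a+6*d)" by (blast dest: mg3)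
    show False
    proof -
      have "i = 0" using e assms by (cases i) auto
      moreover have "j = 0" using e assms by (cases j) auto
      moreover have "k = 0" using e assms by (cases k) auto
      ultimately show False using e assms by simp
    qed
  qed
  have n2: "2*a+d \<notin> monoid_gen {a, 3*a+3*d, 4*a+6*d}"
  proof
    assume "2*a+d \<in> monoid_gen {a, 3*a+3*d, 4*a+6*d}"
    then obtain i j k where e: "2*a+d = i*a+j*(3*a+3*d)+k*(4*a+6*d)" by (blast dest: mg3)
    have j: "j = 0" using e assms by (cases j) auto
    have k: "k = 0" using e assms by (cases k) auto
    have "int 1 * int d = (int i - 2) * int a" using arg_cong[OF e, of int] j k by (simp add: algebra_simps)
    then have "int a dvd int 1 * int d" by (metis dvd_triv_right)
    then have "int 1 = 0" using dvd_small[OF cop] assms by fastforce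
    then show False by simp
  qed
  have n3: "3*a+3*d \<notin> monoid_gen {a, 2*a+d, 4*a+6*d}"
  proof
    assume "3*a+3*d \<in> monoid_gen {a, 2*a+d, 4*a+6*d}"
    then obtain i j k where e: "3*a+3*d = i*a+j*(2*a+d)+k*(4*a+6*d)" by (blast dest: mg3)
    have k: "k = 0" using e assms by (cases k) auto
    have "(3 - int j) * int d = (int i + 2 * int j - 3) * int a"
      using arg_cong[OF e, of int] k by (simp add: algebra_simps)
    then have "int a dvd (3 - int j) * int d" by (metis dvd_triv_right)
    moreover have "j \<le> 3"
    proof (rule ccontr)
      assume "\<not> j \<le> 3"
      then have "j*(2*a+d) \<ge> 4*(2*a+d)" by (intro mult_le_mono1) simp
      moreover have "j*(2*a+d) \<le> 3*a+3*d" unfolding e by simp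
      ultimately have "4*(2*a+d) \<le> 3*a+3*d" by (rule order_trans)
      then show False using assms(2) by simp
    qed
    ultimately have "3 - int j = 0" using dvd_small[OF cop] assms by fastforce
    then have "j = 3" by simp
    then show False using e k assms by simp
  qed
  have n4: "4*a+6*d \<notin> monoid_gen {a, 2*a+d, 3*a+3*d}"
  proof
    assume "4*a+6*d \<in> monoid_gen {a, 2*a+d, 3*a+3*d}"
    then obtain i j k where e: "4*a+6*d = i*a+j*(2*a+d)+k*(3*a+3*d)" by (blast dest: mg3)
    have ee: "(6 - int j - 3 * int k) * int d = (int i + 2 * int j + 3 * int k - 4) * int a"
      using arg_cong[OF e, of int] by (simp add: algebra_simps)
    then have "int a dvd (6 - int j - 3 * int k) * int d" by (metis dvd_triv_right)
    moreover have "6 - int j - 3 * int k \<ge> 0"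
    proof (rule ccontr)
      assume neg: "\<not> ?thesis"
      then have "(6 - int j - 3 * int k) * int d < 0" using assms by (simp add: mult_neg_pos)
      moreover have "(int i + 2 * int j + 3 * int k - 4) * int a \<ge> 0" 
        using neg by simp
      ultimately show False using ee by linarith
    qed
    ultimately have z: "6 - int j - 3 * int k = 0" using dvd_small[OF cop] assms by fastforce
    then have "(int i + 2 * int j + 3 * int k - 4) * int a = 0" using ee by simp
    then have "int i + 2 * int j + 3 * int k - 4 = 0" using assms by simp
    then show False using z by linarith
  qed
  have inj: "inj_on (s_term a d) {1..4}"
    unfolding U inj_on_def using assms by (auto simp: svals)
  have all: "\<forall>j\<in>{1..4::nat}. s_term a d j \<notin> monoid_gen (s_term a d ` ({1..4} - {j}))"
  proof
    fix j :: nat assume "j \<in> {1..4}"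
    then have "j = 1 \<or> j = 2 \<or> j = 3 \<or> j = 4" by auto
    then show "s_term a d j \<notin> monoid_gen (s_term a d ` ({1..4} - {j}))"
    proof (elim disjE)
      assume "j = 1"
      moreover have "{1..4::nat} - {1} = {2,3,4}" by auto
      ultimately show ?thesis using n1 by (simp add: svals)
    next
      assume "j = 2"
      moreover have "{1..4::nat} - {2} = {1,3,4}" by auto
      ultimately show ?thesis using n2 by (simp add: svals)
    next
      assume "j = 3"
      moreover have "{1..4::nat} - {3} = {1,2,4}" by auto
      ultimately show ?thesis using n3 by (simp add: svals)
    next
      assume "j = 4"
      moreover have "{1..4::nat} - {4} = {1,2,3}" by auto
      ultimately show ?thesis using n4 by (simp add: svals)
    qed
  qed
  have min: "minimal_system_of_generators (s_term a d ` {1..4})"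
    unfolding minimal_system_of_generators_def
  proof
    fix x assume "x \<in> s_term a d ` {1..4}"
    then obtain j where j: "j \<in> {1..4}" "x = s_term a d j" by blast
    have "s_term a d ` {1..4} - {x} = s_term a d ` ({1..4} - {j})"
      using inj j by (simp add: inj_on_image_set_diff)
    then show "x \<notin> monoid_gen (s_term a d ` {1..4} - {x})" using all j by simp
  qed
  show ?thesis using inj min all by blast
qed

end
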